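(* Let $\mathcal{H}_A,\mathcal{H}_B$ be finite-dimensional Hilbert spaces and let $\rho_{AB}$ be a density operator on $\mathcal{H}_A\otimes\mathcal{H}_B$. Let $\lambda_1,\dots,\lambda_R>0$ be the operator Schmidt coefficients of $\rho_{AB}$, i.e. $\rho_{AB}/\sqrt{\mathrm{Tr}(\rho_{AB}^2)}=\sum_{i=1}^R\lambda_i\,O_{A,i}\otimes O_{B,i}$ with $\{O_{A,i}\}$ and $\{O_{B,i}\}$ orthonormal families with respect to the Hilbert–Schmidt inner product (so $\sum_i\lambda_i^2=1$). Define the Rényi 2-operator entanglement $S^{(2)}(\rho_{AB})=-\log\big(\sum_{i=1}^R\lambda_i^4\big)$ and the Rényi 2-entropy $R^{(2)}(\rho_{AB})=-\log\big(\mathrm{Tr}(\rho_{AB}^2)\big)$. If $$S^{(2)}(\rho_{AB})>R^{(2)}(\rho_{AB}),$$ then $\rho_{AB}$ is entangled across the bipartition $A$ versus $B$, i.e. it cannot be written as a convex combination $\sum_k\alpha_k\rho_A^{(k)}\otimes\rho_B^{(k)}$ with $\alpha_k\ge0$ and $\rho_A^{(k)},\rho_B^{(k)}$ density operators on $\mathcal{H}_A,\mathcal{H}_B$.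
   Context: The operator Schmidt decomposition of an operator is its Schmidt decomposition as a vector in $\mathrm{End}(\mathcal{H}_A)\otimes\mathrm{End}(\mathcal{H}_B)$ equipped with the Hilbert–Schmidt inner product $\langle X,Y\rangle=\mathrm{Tr}(X^\dagger Y)$; the Schmidt coefficients are unique. *)

theory Defs
  imports "HOL-Analysis.Analysis"
begin

text \<open>Operators on a finite-dimensional Hilbert space with orthonormal basis indexed by a
finite type 'n are represented as complex matrices of type complex^'n^'n.
The tensor product space H_A \<otimes> H_B has basis indexed by 'a \<times> 'b.\<close>

type_synonym 'n op = "complex^'n^'n"

definition adj :: "('n::finite) op \<Rightarrow> 'n op" where
  "adj A = (\<chi> i j. cnj (A $ j $ i))"

definition tr :: "('n::finite) op \<Rightarrow> complex" where
  "tr A = (\<Sum>i\<in>UNIV. A $ i $ i)"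

definition hermitian :: "('n::finite) op \<Rightarrow> bool" where
  "hermitian A \<longleftrightarrow> adj A = A"

definition psd :: "('n::finite) op \<Rightarrow> bool" where
  "psd A \<longleftrightarrow> (\<forall>v :: complex^'n.
     Im (\<Sum>i\<in>UNIV. cnj (v $ i) * (A *v v) $ i) = 0 \<and>
     Re (\<Sum>i\<in>UNIV. cnj (v $ i) * (A *v v) $ i) \<ge> 0)"

definition density_op :: "('n::finite) op \<Rightarrow> bool" where
  "density_op A \<longleftrightarrow> hermitian A \<and> psd A \<and> tr A = 1"

definition kron :: "('a::finite) op \<Rightarrow> ('b::finite) op \<Rightarrow> ('a \<times> 'b) op" where
  "kron A B = (\<chi> p q. A $ fst p $ fst q * B $ snd p $ snd q)"

definition hs :: "('n::finite) op \<Rightarrow> 'n op \<Rightarrow> complex" where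
  "hs X Y = tr (adj X ** Y)"

definition hs_orthonormal :: "nat \<Rightarrow> (nat \<Rightarrow> ('n::finite) op) \<Rightarrow> bool" where
  "hs_orthonormal R F \<longleftrightarrow> (\<forall>i<R. \<forall>j<R. hs (F i) (F j) = (if i = j then 1 else 0))"

definition purity :: "('n::finite) op \<Rightarrow> real" where
  "purity \<rho> = Re (tr (\<rho> ** \<rho>))"

definition op_schmidt_decomp ::
  "(('a::finite) \<times> ('b::finite)) op \<Rightarrow> nat \<Rightarrow> (nat \<Rightarrow> real) \<Rightarrow> (nat \<Rightarrow> 'a op) \<Rightarrow> (nat \<Rightarrow> 'b op) \<Rightarrow> bool"
  where
  "op_schmidt_decomp \<rho> R lam OA OB \<longleftrightarrow>
     (\<forall>i<R. lam i > 0) \<and> hs_orthonormal R OA \<and> hs_orthonormal R OB \<and>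
     (1 / sqrt (purity \<rho>)) *\<^sub>R \<rho> = (\<Sum>i<R. lam i *\<^sub>R kron (OA i) (OB i))"

definition renyi2_op_ent :: "nat \<Rightarrow> (nat \<Rightarrow> real) \<Rightarrow> real" where
  "renyi2_op_ent R lam = - ln (\<Sum>i<R. lam i ^ 4)"

definition renyi2_entropy :: "('n::finite) op \<Rightarrow> real" where
  "renyi2_entropy \<rho> = - ln (purity \<rho>)"

definition separable :: "(('a::finite) \<times> ('b::finite)) op \<Rightarrow> bool" where
  "separable \<rho> \<longleftrightarrow> (\<exists>(K::nat) (\<alpha>::nat \<Rightarrow> real) (\<rho>A::nat \<Rightarrow> 'a op) (\<rho>B::nat \<Rightarrow> 'b op).
      (\<forall>k<K. \<alpha> k \<ge> 0) \<and> (\<Sum>k<K. \<alpha> k) = 1 \<and>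
      (\<forall>k<K. density_op (\<rho>A k) \<and> density_op (\<rho>B k)) \<and>
      \<rho> = (\<Sum>k<K. \<alpha> k *\<^sub>R kron (\<rho>A k) (\<rho>B k)))"

end

theory Submission
  imports Defs
begin


definition cmul :: "complex \<Rightarrow> ('n::finite) op \<Rightarrow> 'n op" where
  "cmul c X = (\<chi> i j. c * X$i$j)"

lemma hs_expand: "hs X Y = (\<Sum>i\<in>UNIV. \<Sum>j\<in>UNIV. cnj (X$i$j) * Y$i$j)"
proof -
  have "hs X Y = (\<Sum>i\<in>UNIV. \<Sum>k\<in>UNIV. cnj (X$k$i) * Y$k$i)"
    unfolding hs_def tr_def adj_def matrix_matrix_mult_def by simp
  also have "\<dots> = (\<Sum>k\<in>UNIV. \<Sum>i\<in>UNIV. cnj (X$k$i) * Y$k$i)"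
    by (rule sum.swap)
  finally show ?thesis .
qed

lemma hs_add_left: "hs (A + B) C = hs A C + hs B C"
  by (simp add: hs_expand algebra_simps sum.distrib)
lemma hs_diff_left: "hs (A - B) C = hs A C - hs B C"
  by (simp add: hs_expand algebra_simps sum_subtractf)
lemma hs_add_right: "hs C (A + B) = hs C A + hs C B"
  by (simp add: hs_expand algebra_simps sum.distrib)
lemma hs_diff_right: "hs C (A - B) = hs C A - hs C B"
  by (simp add: hs_expand algebra_simps sum_subtractf)
lemma hs_cmul_left: "hs (cmul c A) C = cnj c * hs A C"
  by (simp add: hs_expand cmul_def algebra_simps sum_distrib_left)
lemma hs_cmul_right: "hs C (cmul c A) = c * hs C A"
  by (simp add: hs_expand cmul_def algebra_simps sum_distrib_left)
lemma hs_scaleR_left: "hs (r *\<^sub>R A) C = of_real r * hs A C"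
  by (simp add: hs_expand algebra_simps sum_distrib_left scaleR_conv_of_real[where 'a=complex])
lemma hs_scaleR_right: "hs C (r *\<^sub>R A) = of_real r * hs C A"
  by (simp add: hs_expand algebra_simps sum_distrib_left scaleR_conv_of_real[where 'a=complex])
lemma hs_zero_left: "hs 0 C = 0" by (simp add: hs_expand)
lemma hs_zero_right: "hs C 0 = 0" by (simp add: hs_expand)
lemma hs_sum_left: "hs (\<Sum>i\<in>S. F i) C = (\<Sum>i\<in>S. hs (F i) C)"
  by (induction S rule: infinite_finite_induct) (simp_all add: hs_add_left hs_zero_left)
lemma hs_sum_right: "hs C (\<Sum>i\<in>S. F i) = (\<Sum>i\<in>S. hs C (F i))"
  by (induction S rule: infinite_finite_induct) (simp_all add: hs_add_right hs_zero_right)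
lemma hs_cnj: "hs X Y = cnj (hs Y X)"
  by (simp add: hs_expand mult.commute)
lemma cnj_mult_self: "cnj z * z = of_real ((cmod z)^2)"
  by (metis complex_norm_square mult.commute)
lemma hs_self: "hs X X = of_real (\<Sum>i\<in>UNIV. \<Sum>j\<in>UNIV. (cmod (X$i$j))^2)"
  by (simp only: hs_expand cnj_mult_self of_real_sum)
lemma hs_self_nonneg: "Re (hs X X) \<ge> 0" "Im (hs X X) = 0"
  by (auto simp: hs_self intro!: sum_nonneg)

lemma sum_pair_univ:
  "(\<Sum>p\<in>(UNIV::(('a::finite) \<times> ('b::finite)) set). g p) = (\<Sum>a\<in>UNIV. \<Sum>b\<in>UNIV. g (a,b))"
proof -
  have "(\<Sum>p\<in>(UNIV::('a \<times> 'b) set). g p) = (\<Sum>p\<in>UNIV \<times> UNIV. g p)" by simp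
  also have "\<dots> = (\<Sum>a\<in>UNIV. \<Sum>b\<in>UNIV. g (a,b))" by (subst sum.cartesian_product) simp
  finally show ?thesis .
qed

lemma hs_kron: "hs (kron A B) (kron C D) = hs A C * hs B D"
proof -
  have "hs (kron A B) (kron C D) = (\<Sum>a1\<in>UNIV. \<Sum>b1\<in>UNIV. \<Sum>a2\<in>UNIV. \<Sum>b2\<in>UNIV.
      cnj (A$a1$a2 * B$b1$b2) * (C$a1$a2 * D$b1$b2))"
    by (simp only: hs_expand sum_pair_univ kron_def vec_lambda_beta fst_conv snd_conv)
  also have "\<dots> = (\<Sum>a1\<in>UNIV. \<Sum>b1\<in>UNIV. \<Sum>a2\<in>UNIV. \<Sum>b2\<in>UNIV.
      (cnj (A$a1$a2) * C$a1$a2) * (cnj (B$b1$b2) * D$b1$b2))"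
    by (intro sum.cong refl) (simp add: mult_ac)
  also have "\<dots> = hs A C * hs B D"
    by (simp only: hs_expand sum_product)
  finally show ?thesis .
qed



lemma minor_aux:
  fixes a b :: real and c :: complex
  assumes H: "\<And>x y. Re (cnj x*(of_real a*x + c*y) + cnj y*(cnj c*x + of_real b*y)) \<ge> 0"
  shows "cmod c ^2 \<le> a*b"
proof -
  obtain p q where c: "c = Complex p q" by (cases c)
  have n: "cmod c ^2 = p^2 + q^2" by (simp add: c cmod_def)
  have h1: "b * (a*b - (p^2+q^2)) \<ge> 0" using H[of "of_real b" "- cnj c"]
    by (simp add: c power2_eq_square algebra_simps)
  have h2: "a * (a*b - (p^2+q^2)) \<ge> 0" using H[of "- c" "of_real a"]
    by (simp add: c power2_eq_square algebra_simps)
  have h3: "a + (b - 2)*(p^2+q^2) \<ge> 0" using H[of 1 "- cnj c"]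
    by (simp add: c power2_eq_square algebra_simps)
  have ha: "a \<ge> 0" using H[of 1 0] by simp
  have hb: "b \<ge> 0" using H[of 0 1] by simp
  show ?thesis
  proof (cases "a > 0 \<or> b > 0")
    case True
    then show ?thesis using h1 h2 n
      by (metis diff_ge_0_iff_ge zero_le_mult_iff linorder_not_le)
  next
    case False
    then have "a = 0" "b = 0" using ha hb by auto
    then have "p^2+q^2 \<le> 0" using h3 by simp
    then show ?thesis using n \<open>a = 0\<close> by simp
  qed
qed

lemma sum_two:
  fixes f :: "'n::finite \<Rightarrow> complex"
  assumes "i \<noteq> j"
  shows "(\<Sum>l\<in>UNIV. f l * (if l = i then x else if l = j then y else 0)) = f i * x + f j * y"
proof -
  have "(\<Sum>l\<in>UNIV. f l * (if l = i then x else if l = j then y else 0))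
     = (\<Sum>l\<in>{i,j}. f l * (if l = i then x else if l = j then y else 0))"
    by (rule sum.mono_neutral_right) auto
  then show ?thesis using assms by simp
qed

lemma sum_two':
  fixes f :: "'n::finite \<Rightarrow> complex"
  assumes "i \<noteq> j"
  shows "(\<Sum>l\<in>UNIV. cnj (if l = i then x else if l = j then y else 0) * f l) = cnj x * f i + cnj y * f j"
proof -
  have "(\<Sum>l\<in>UNIV. cnj (if l = i then x else if l = j then y else 0) * f l)
     = (\<Sum>l\<in>{i,j}. cnj (if l = i then x else if l = j then y else 0) * f l)"
    by (rule sum.mono_neutral_right) auto
  then show ?thesis using assms by simp
qed

lemma herm_entry: "hermitian A \<Longrightarrow> A$j$i = cnj (A$i$j)"
  unfolding hermitian_def adj_def by (metis vec_lambda_beta complex_cnj_cnj)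

lemma herm_diag: "hermitian A \<Longrightarrow> A$i$i = of_real (Re (A$i$i))"
  using herm_entry[of A i i] by (simp add: complex_eq_iff)

lemma minor:
  assumes "hermitian A" "psd A"
  shows "cmod (A$i$j) ^2 \<le> Re (A$i$i) * Re (A$j$j)"
proof (cases "i = j")
  case True
  have "cmod (A$i$i) = cmod (of_real (Re (A$i$i)))" by (subst herm_diag[OF assms(1)], rule refl)
  then have "cmod (A$i$i) = abs (Re (A$i$i))" by simp
  then show ?thesis using True by (simp add: power2_eq_square)
next
  case False
  show ?thesis
  proof (rule minor_aux)
    fix x y
    define v :: "complex^'a" where "v = (\<chi> l. if l = i then x else if l = j then y else 0)"
    have Av: "(A *v v) $ k = A$k$i * x + A$k$j * y" for k
      unfolding matrix_vector_mult_def v_def vec_lambda_beta by (rule sum_two[OF False])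
    have "(\<Sum>k\<in>UNIV. cnj (v $ k) * (A *v v) $ k) = (\<Sum>k\<in>UNIV. cnj (if k = i then x else if k = j then y else 0) * (A$k$i * x + A$k$j * y))"
      unfolding Av unfolding v_def vec_lambda_beta by (rule refl)
    also have "\<dots> = cnj x * (A$i$i * x + A$i$j * y) + cnj y * (A$j$i * x + A$j$j * y)"
      by (rule sum_two'[OF False])
    finally have e: "(\<Sum>k\<in>UNIV. cnj (v $ k) * (A *v v) $ k) = cnj x * (A$i$i * x + A$i$j * y) + cnj y * (A$j$i * x + A$j$j * y)" .
    have "Re (\<Sum>k\<in>UNIV. cnj (v $ k) * (A *v v) $ k) \<ge> 0" using assms(2) unfolding psd_def by blast
    then have g: "Re (cnj x * (A$i$i * x + A$i$j * y) + cnj y * (A$j$i * x + A$j$j * y)) \<ge> 0" by (simp only: e)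
    define a where "a = Re (A$i$i)"
    define b where "b = Re (A$j$j)"
    have ha: "A$i$i = of_real a" unfolding a_def by (rule herm_diag[OF assms(1)])
    have hb: "A$j$j = of_real b" unfolding b_def by (rule herm_diag[OF assms(1)])
    have hc: "A$j$i = cnj (A$i$j)" by (rule herm_entry[OF assms(1)])
    from g show "Re (cnj x*(of_real (Re (A$i$i))*x + A$i$j*y) + cnj y*(cnj (A$i$j)*x + of_real (Re (A$j$j))*y)) \<ge> 0"
      unfolding a_def[symmetric] b_def[symmetric] by (simp only: ha hb hc)
  qed
qed

lemma density_hs_le:
  assumes "density_op A"
  shows "Re (hs A A) \<le> 1"
proof -
  have h: "hermitian A" "psd A" "tr A = 1" using assms unfolding density_op_def by auto
  have "Re (hs A A) = (\<Sum>i\<in>UNIV. \<Sum>j\<in>UNIV. (cmod (A$i$j))^2)" by (simp add: hs_self)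
  also have "\<dots> \<le> (\<Sum>i\<in>UNIV. \<Sum>j\<in>UNIV. Re (A$i$i) * Re (A$j$j))"
    by (intro sum_mono minor h)
  also have "\<dots> = (Re (tr A))^2"
    by (simp add: tr_def power2_eq_square sum_product)
  also have "\<dots> = 1" using h by simp
  finally show ?thesis .
qed

lemma bessel:
  assumes "hs_orthonormal R F"
  shows "(\<Sum>i<R. (cmod (hs (F i) X))^2) \<le> Re (hs X X)"
proof -
  define c where "c i = hs (F i) X" for i
  define S where "S = (\<Sum>i<R. cmul (c i) (F i))"
  have o: "(\<Sum>j<R. c j * hs (F i) (F j)) = c i" if i: "i < R" for i
  proof -
    have "(\<Sum>j<R. c j * hs (F i) (F j)) = (\<Sum>j<R. if i = j then c j else 0)"
      using assms i unfolding hs_orthonormal_def by (intro sum.cong refl) auto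
    also have "\<dots> = c i" using i by simp
    finally show ?thesis .
  qed
  have SX: "hs S X = (\<Sum>i<R. cnj (c i) * c i)"
    by (simp add: S_def hs_sum_left hs_cmul_left c_def)
  have XS: "hs X S = (\<Sum>i<R. c i * cnj (c i))"
    by (simp add: S_def hs_sum_right hs_cmul_right c_def hs_cnj[of X])
  have FS: "hs (F i) S = c i" if "i < R" for i
    using that by (simp add: S_def hs_sum_right hs_cmul_right o)
  have "hs S S = (\<Sum>i<R. hs (cmul (c i) (F i)) S)"
    by (subst (1) S_def) (rule hs_sum_left)
  then have SS: "hs S S = (\<Sum>i<R. cnj (c i) * c i)"
    by (simp add: hs_cmul_left FS)
  have "hs (X - S) (X - S) = hs X X - (\<Sum>i<R. c i * cnj (c i))"
    by (simp add: hs_diff_left hs_diff_right SX XS SS mult.commute)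
  moreover have "Re (hs (X - S) (X - S)) \<ge> 0" by (rule hs_self_nonneg)
  moreover have "Re (c i * cnj (c i)) = (cmod (c i))^2" for i
    by (metis cnj_mult_self mult.commute Re_complex_of_real)
  ultimately show ?thesis by (simp add: c_def)
qed



lemma kron_bound:
  assumes "hs_orthonormal R OA" "hs_orthonormal R OB" "density_op s" "density_op t"
  shows "cmod (\<Sum>i<R. hs (kron (OA i) (OB i)) (kron s t)) \<le> 1"
proof -
  let ?a = "\<lambda>i. cmod (hs (OA i) s)" and ?b = "\<lambda>i. cmod (hs (OB i) t)"
  have "cmod (\<Sum>i<R. hs (kron (OA i) (OB i)) (kron s t)) = cmod (\<Sum>i<R. hs (OA i) s * hs (OB i) t)"
    by (simp add: hs_kron)
  also have "\<dots> \<le> (\<Sum>i<R. ?a i * ?b i)"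
    by (rule order_trans[OF norm_sum]) (simp add: norm_mult)
  finally have 1: "cmod (\<Sum>i<R. hs (kron (OA i) (OB i)) (kron s t)) \<le> (\<Sum>i<R. ?a i * ?b i)" .
  have "(\<Sum>i<R. ?a i * ?b i)^2 \<le> (\<Sum>i<R. (?a i)^2) * (\<Sum>i<R. (?b i)^2)"
    by (rule Cauchy_Schwarz_ineq_sum)
  also have "\<dots> \<le> 1 * 1"
    using bessel[OF assms(1), of s] bessel[OF assms(2), of t] density_hs_le[OF assms(3)] density_hs_le[OF assms(4)]
    by (intro mult_mono) (auto intro: sum_nonneg)
  finally have "(\<Sum>i<R. ?a i * ?b i)^2 \<le> 1" by simp
  then have "(\<Sum>i<R. ?a i * ?b i)^2 \<le> 1^2" by simp
  then have "(\<Sum>i<R. ?a i * ?b i) \<le> 1"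
    by (rule power2_le_imp_le) simp
  with 1 show ?thesis by linarith
qed

lemma real_ineq:
  fixes lam :: "nat \<Rightarrow> real" and s :: real
  assumes pos: "\<And>i. i < R \<Longrightarrow> lam i > 0" and sq: "(\<Sum>i<R. lam i ^ 2) = 1"
    and s: "s > 0" and b: "s * (\<Sum>i<R. lam i) \<le> 1"
  shows "s^2 \<le> (\<Sum>i<R. lam i ^ 4)"
proof -
  have "(\<Sum>i<R. sqrt (lam i) * (sqrt (lam i) * lam i))^2 \<le> (\<Sum>i<R. (sqrt (lam i))^2) * (\<Sum>i<R. (sqrt (lam i) * lam i)^2)"
    by (rule Cauchy_Schwarz_ineq_sum)
  moreover have "(\<Sum>i<R. sqrt (lam i) * (sqrt (lam i) * lam i)) = (\<Sum>i<R. lam i ^ 2)"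
    by (intro sum.cong refl) (use pos in \<open>simp add: power2_eq_square less_imp_le flip: mult.assoc\<close>)
  moreover have "(\<Sum>i<R. (sqrt (lam i))^2) = (\<Sum>i<R. lam i)"
    by (intro sum.cong refl) (use pos in \<open>simp add: less_imp_le\<close>)
  moreover have "(\<Sum>i<R. (sqrt (lam i) * lam i)^2) = (\<Sum>i<R. lam i ^ 3)"
    by (intro sum.cong refl) (use pos in \<open>simp add: less_imp_le power_mult_distrib power3_eq_cube power2_eq_square\<close>)
  ultimately have 1: "1 \<le> (\<Sum>i<R. lam i) * (\<Sum>i<R. lam i ^ 3)" using sq by simp
  have n3: "(\<Sum>i<R. lam i ^ 3) \<ge> 0" using pos by (intro sum_nonneg) (simp add: less_imp_le)
  have "s * 1 \<le> s * ((\<Sum>i<R. lam i) * (\<Sum>i<R. lam i ^ 3))" using 1 s by (intro mult_left_mono) auto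
  also have "\<dots> = (s * (\<Sum>i<R. lam i)) * (\<Sum>i<R. lam i ^ 3)" by simp
  also have "\<dots> \<le> 1 * (\<Sum>i<R. lam i ^ 3)" using b n3 by (intro mult_right_mono) auto
  finally have 2: "s \<le> (\<Sum>i<R. lam i ^ 3)" by simp
  have "(\<Sum>i<R. lam i * lam i ^ 2)^2 \<le> (\<Sum>i<R. (lam i)^2) * (\<Sum>i<R. (lam i ^ 2)^2)"
    by (rule Cauchy_Schwarz_ineq_sum)
  then have 3: "(\<Sum>i<R. lam i ^ 3)^2 \<le> (\<Sum>i<R. lam i ^ 4)"
    using sq by (simp add: power3_eq_cube power2_eq_square mult.assoc power4_eq_xxxx)
  have "s^2 \<le> (\<Sum>i<R. lam i ^ 3)^2" using 2 s by (intro power_mono) auto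
  with 3 show ?thesis by linarith
qed



theorem proposition1:
  fixes \<rho> :: "(('a::finite) \<times> ('b::finite)) op"
    and R :: nat and lam :: "nat \<Rightarrow> real"
    and OA :: "nat \<Rightarrow> 'a op" and OB :: "nat \<Rightarrow> 'b op"
  assumes "density_op \<rho>"
    and "op_schmidt_decomp \<rho> R lam OA OB"
    and "renyi2_op_ent R lam > renyi2_entropy \<rho>"
  shows "\<not> separable \<rho>"
proof
  assume sep: "separable \<rho>"
  define P where "P = purity \<rho>"
  define K where "K i = kron (OA i) (OB i)" for i
  define D where "D = (\<Sum>i<R. lam i *\<^sub>R K i)"
  have pos: "\<And>i. i < R \<Longrightarrow> lam i > 0" and oA: "hs_orthonormal R OA" and oB: "hs_orthonormal R OB"
    and eq: "(1 / sqrt P) *\<^sub>R \<rho> = D"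
    using assms(2) unfolding op_schmidt_decomp_def P_def D_def K_def by auto
  have herm: "hermitian \<rho>" and tr1: "tr \<rho> = 1" using assms(1) unfolding density_op_def by auto
  have hsrr: "hs \<rho> \<rho> = tr (\<rho> ** \<rho>)" using herm unfolding hs_def hermitian_def by simp
  have hsP: "hs \<rho> \<rho> = of_real P"
    using hsrr hs_self_nonneg(2)[of \<rho>] unfolding P_def purity_def by (simp add: complex_eq_iff)
  have P0: "P \<ge> 0" using hs_self_nonneg(1)[of \<rho>] hsP by simp
  have Ppos: "P > 0"
  proof (rule ccontr)
    assume "\<not> P > 0"
    then have "P = 0" using P0 by simp
    moreover have "P = (\<Sum>i\<in>UNIV. \<Sum>j\<in>UNIV. (cmod (\<rho>$i$j))^2)" using hsP hs_self[of \<rho>] by (metis of_real_eq_iff)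
    ultimately have "(\<Sum>i\<in>UNIV. \<Sum>j\<in>UNIV. (cmod (\<rho>$i$j))^2) = 0" by simp
    then have "\<forall>i. (\<Sum>j\<in>UNIV. (cmod (\<rho>$i$j))^2) = 0"
      by (subst (asm) sum_nonneg_eq_0_iff) (auto intro: sum_nonneg)
    then have "\<forall>i j. (cmod (\<rho>$i$j))^2 = 0"
      by (subst (asm) sum_nonneg_eq_0_iff) auto
    then have z: "\<rho>$i$i = 0" for i
    proof -
      have "(cmod (\<rho>$i$i))^2 = 0" using \<open>\<forall>i j. (cmod (\<rho>$i$j))^2 = 0\<close> by blast
      then show ?thesis by simp
    qed
    have "tr \<rho> = 0" unfolding tr_def by (simp only: z sum.neutral_const)
    with tr1 show False by simp
  qed
  define sP where "sP = sqrt P"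
  have sP: "sP > 0" "sP^2 = P" using Ppos unfolding sP_def by auto
  have rhoD: "\<rho> = sP *\<^sub>R D" using eq sP(1) unfolding sP_def[symmetric] by (auto simp: field_simps)
  have KK: "i < R \<Longrightarrow> j < R \<Longrightarrow> hs (K i) (K j) = (if i = j then 1 else 0)" for i j
    using oA oB unfolding K_def hs_orthonormal_def by (simp add: hs_kron)
  have KD: "i < R \<Longrightarrow> hs (K i) D = of_real (lam i)" for i
    unfolding D_def by (simp add: hs_sum_right hs_scaleR_right KK if_distrib cong: if_cong)
  have "hs D D = (\<Sum>i<R. hs (lam i *\<^sub>R K i) D)"
    by (subst (1) D_def) (rule hs_sum_left)
  then have "hs D D = (\<Sum>i<R. of_real (lam i) * of_real (lam i))"
    by (simp add: hs_scaleR_left KD)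
  moreover have "hs \<rho> \<rho> = of_real (sP^2) * hs D D"
    unfolding rhoD by (simp add: hs_scaleR_left hs_scaleR_right power2_eq_square)
  ultimately have "of_real P = of_real (sP^2) * (\<Sum>i<R. of_real (lam i) * of_real (lam i) :: complex)"
    using hsP by simp
  moreover have e1: "(\<Sum>i<R. of_real (lam i) * of_real (lam i) :: complex) = of_real (\<Sum>i<R. lam i ^ 2)"
    by (simp add: power2_eq_square)
  ultimately have "of_real P = (of_real (sP^2 * (\<Sum>i<R. lam i ^ 2)) :: complex)"
    by (simp only: of_real_mult)
  then have "P = sP^2 * (\<Sum>i<R. lam i ^ 2)" by (simp only: of_real_eq_iff)
  then have "P = P * (\<Sum>i<R. lam i ^ 2)" using sP(2) by simp
  then have sq: "(\<Sum>i<R. lam i ^ 2) = 1" using Ppos by simp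
  define L where "L X = (\<Sum>i<R. hs (K i) X)" for X :: "('a \<times> 'b) op"
  have "L \<rho> = (\<Sum>i<R. of_real sP * of_real (lam i))"
    unfolding L_def rhoD hs_scaleR_right by (intro sum.cong refl) (simp add: KD)
  then have Lrho: "L \<rho> = of_real (sP * (\<Sum>i<R. lam i))"
    by (simp add: sum_distrib_left)
  obtain Kn :: nat and \<alpha> :: "nat \<Rightarrow> real" and \<rho>A :: "nat \<Rightarrow> 'a op" and \<rho>B :: "nat \<Rightarrow> 'b op" where
    sp: "\<forall>k<Kn. \<alpha> k \<ge> 0" "(\<Sum>k<Kn. \<alpha> k) = 1" "\<forall>k<Kn. density_op (\<rho>A k) \<and> density_op (\<rho>B k)"
      "\<rho> = (\<Sum>k<Kn. \<alpha> k *\<^sub>R kron (\<rho>A k) (\<rho>B k))"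
    using sep unfolding separable_def by blast
  have "L \<rho> = (\<Sum>i<R. \<Sum>k<Kn. of_real (\<alpha> k) * hs (K i) (kron (\<rho>A k) (\<rho>B k)))"
    unfolding L_def by (subst sp(4)) (simp only: hs_sum_right hs_scaleR_right)
  also have "\<dots> = (\<Sum>k<Kn. \<Sum>i<R. of_real (\<alpha> k) * hs (K i) (kron (\<rho>A k) (\<rho>B k)))"
    by (rule sum.swap)
  also have "\<dots> = (\<Sum>k<Kn. of_real (\<alpha> k) * L (kron (\<rho>A k) (\<rho>B k)))"
    unfolding L_def by (simp only: sum_distrib_left)
  finally have eqL: "L \<rho> = (\<Sum>k<Kn. of_real (\<alpha> k) * L (kron (\<rho>A k) (\<rho>B k)))" .
  have "cmod (L \<rho>) \<le> (\<Sum>k<Kn. cmod (of_real (\<alpha> k) * L (kron (\<rho>A k) (\<rho>B k))))"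
    unfolding eqL by (rule norm_sum)
  also have "\<dots> = (\<Sum>k<Kn. \<alpha> k * cmod (L (kron (\<rho>A k) (\<rho>B k))))"
    by (intro sum.cong refl) (use sp(1) in \<open>simp add: norm_mult\<close>)
  also have "\<dots> \<le> (\<Sum>k<Kn. \<alpha> k * 1)"
    using sp(1,3) kron_bound[OF oA oB] unfolding L_def K_def
    by (intro sum_mono mult_left_mono) auto
  finally have "cmod (L \<rho>) \<le> 1" using sp(2) by simp
  moreover have "(\<Sum>i<R. lam i) \<ge> 0" using pos by (intro sum_nonneg) (simp add: less_imp_le)
  ultimately have "cmod (L \<rho>) \<le> 1" "(\<Sum>i<R. lam i) \<ge> 0" by auto
  then have "abs (sP * (\<Sum>i<R. lam i)) \<le> 1" unfolding Lrho norm_of_real by simp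
  then have b: "sP * (\<Sum>i<R. lam i) \<le> 1" by linarith
  have "sP^2 \<le> (\<Sum>i<R. lam i ^ 4)" by (rule real_ineq[OF pos sq sP(1) b])
  then have main: "P \<le> (\<Sum>i<R. lam i ^ 4)" unfolding sP(2) .
  have "ln P \<le> ln (\<Sum>i<R. lam i ^ 4)" using main Ppos by (metis ln_le_cancel_iff less_le_trans)
  then show False using assms(3) unfolding renyi2_op_ent_def renyi2_entropy_def P_def[symmetric] by linarith
qed

end
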